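(* (i) Suppose that $\rho$ is an NPT (non-positive partial transpose) bipartite state. For every vector $\ket{y}$ in the negative eigenspace of $\rho^\Gamma$ (the partial transpose of $\rho$ with respect to the first subsystem), let $\ket{y}\in\mathbb{C}^{m(y)}\otimes\mathbb{C}^{n(y)}$, i.e. $m(y)$ and $n(y)$ are the local dimensions of the space supporting $\ket{y}$, and denote $p=\min_{\ket{y}}\{m(y),n(y)\}$, the minimum taken over all $\ket{y}$ in the negative eigenspace of $\rho^\Gamma$. Then $\rho$ can be locally projected (by a product operator) to an NPT state supported on $\mathbb{C}^{p}\otimes\mathbb{C}^{p}$. (ii) Suppose that $W$ is a bipartite entanglement witness. For every vector $\ket{y}$ in the negative eigenspace of $W$, let $\ket{y}\in\mathbb{C}^{m(y)}\otimes\mathbb{C}^{n(y)}$, i.e. $m(y)$ and $n(y)$ are the local dimensions of the space supporting $\ket{y}$, and denote $p=\min_{\ket{y}}\{m(y),n(y)\}$, the minimum taken over all $\ket{y}$ in the negative eigenspace of $W$. Then $W$ can be locally projected (by a product operator) to an entanglement witness supported on $\mathbb{C}^{p}\otimes\mathbb{C}^{p}$.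
   Context: Bipartite quantum systems over the complex field. An entanglement witness (EW) is a Hermitian $W$ with $\mathrm{tr}(W\rho)\geq 0$ for all separable states $\rho$ and $\mathrm{tr}(W\sigma)<0$ for at least one entangled state $\sigma$. $M^\Gamma$ denotes the partial transpose of a bipartite matrix $M$ with respect to the first subsystem; a state $\rho$ is NPT if $\rho^\Gamma$ is not positive semidefinite. "Locally projecting" means applying a product operator $X=U\otimes V$ (e.g. a local unitary followed by a product projector $P=I_p\otimes I_p$) as $X M X^\dagger$. *)

theory Defs
  imports "HOL-Analysis.Analysis"
begin

text \<open>Bipartite system C^M (x) C^N with M = CARD('a), N = CARD('b); the product basis is
  indexed by pairs ('a \<times> 'b). Operators are complex matrices indexed by such pairs.\<close>

type_synonym ('a, 'b) bvec = "complex ^ ('a \<times> 'b)"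
type_synonym ('a, 'b) bop = "complex ^ ('a \<times> 'b) ^ ('a \<times> 'b)"

definition tens :: "complex ^ 'a::finite \<Rightarrow> complex ^ 'b::finite \<Rightarrow> complex ^ ('a \<times> 'b)" where
  "tens u v = (\<chi> ij. u $ fst ij * v $ snd ij)"

definition kron :: "complex ^ 'a::finite ^ 'a \<Rightarrow> complex ^ 'b::finite ^ 'b \<Rightarrow> complex ^ ('a \<times> 'b) ^ ('a \<times> 'b)" where
  "kron A B = (\<chi> ij kl. A $ fst ij $ fst kl * B $ snd ij $ snd kl)"

definition adj :: "complex ^ 'n::finite ^ 'm \<Rightarrow> complex ^ 'm::finite ^ 'n" where
  "adj M = (\<chi> i j. cnj (M $ j $ i))"

definition ptrans :: "('a::finite, 'b::finite) bop \<Rightarrow> ('a::finite, 'b::finite) bop" where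
  "ptrans M = (\<chi> ij kl. M $ (fst kl, snd ij) $ (fst ij, snd kl))"

definition cinner :: "complex ^ 'n::finite \<Rightarrow> complex ^ 'n \<Rightarrow> complex" where
  "cinner x y = (\<Sum>i\<in>UNIV. cnj (x $ i) * y $ i)"

definition hermitian :: "complex ^ 'n::finite ^ 'n \<Rightarrow> bool" where
  "hermitian M \<longleftrightarrow> adj M = M"

definition psd :: "complex ^ 'n::finite ^ 'n \<Rightarrow> bool" where
  "psd M \<longleftrightarrow> hermitian M \<and> (\<forall>x. Im (cinner x (M *v x)) = 0 \<and> 0 \<le> Re (cinner x (M *v x)))"

definition density :: "complex ^ 'n::finite ^ 'n \<Rightarrow> bool" where
  "density M \<longleftrightarrow> psd M \<and> trace M = 1"

definition npt_state :: "('a::finite, 'b::finite) bop \<Rightarrow> bool" where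
  "npt_state \<rho> \<longleftrightarrow> density \<rho> \<and> \<not> psd (ptrans \<rho>)"

definition separable :: "('a::finite, 'b::finite) bop \<Rightarrow> bool" where
  "separable \<rho> \<longleftrightarrow> density \<rho> \<and>
     (\<exists>k (pr :: nat \<Rightarrow> real) (A :: nat \<Rightarrow> complex ^ 'a::finite ^ 'a) (B :: nat \<Rightarrow> complex ^ 'b ^ 'b).
        (\<forall>i<k. 0 \<le> pr i \<and> density (A i) \<and> density (B i)) \<and> (\<Sum>i<k. pr i) = 1 \<and>
        \<rho> = (\<Sum>i<k. pr i *\<^sub>R kron (A i) (B i)))"

definition entangled :: "('a::finite, 'b::finite) bop \<Rightarrow> bool" where
  "entangled \<rho> \<longleftrightarrow> density \<rho> \<and> \<not> separable \<rho>"

definition ent_witness :: "('a::finite, 'b::finite) bop \<Rightarrow> bool" where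
  "ent_witness W \<longleftrightarrow> hermitian W \<and>
     (\<forall>\<rho>. separable \<rho> \<longrightarrow> 0 \<le> Re (trace (W ** \<rho>))) \<and>
     (\<exists>\<sigma>. entangled \<sigma> \<and> Re (trace (W ** \<sigma>)) < 0)"

definition cspan :: "(complex ^ 'n::finite) set \<Rightarrow> (complex ^ 'n) set" where
  "cspan E = {x. \<exists>S c. finite S \<and> S \<subseteq> E \<and> x = (\<Sum>v\<in>S. (\<chi> i. c v * v $ i))}"

definition neg_eigenspace :: "complex ^ 'n::finite ^ 'n \<Rightarrow> (complex ^ 'n) set" where
  "neg_eigenspace H = cspan {v. v \<noteq> 0 \<and> (\<exists>lam::real. lam < 0 \<and> H *v v = (\<chi> i. of_real lam * v $ i))}"

text \<open>Local dimensions of the space supporting y: y \<in> U (x) C^N with dim U = m(y) minimal,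
  resp. y \<in> C^M (x) V with dim V = n(y) minimal (U spanned by m vectors, V by n vectors).\<close>
definition ldim_A :: "('a::finite, 'b::finite) bvec \<Rightarrow> nat" where
  "ldim_A y = (LEAST m. \<exists>u :: nat \<Rightarrow> complex ^ 'a::finite.
                  y \<in> cspan {tens (u i) w | i w. i < m})"

definition ldim_B :: "('a::finite, 'b::finite) bvec \<Rightarrow> nat" where
  "ldim_B y = (LEAST n. \<exists>v :: nat \<Rightarrow> complex ^ 'b.
                  y \<in> cspan {tens w (v j) | j w. j < n})"

definition pmin :: "('a::finite, 'b::finite) bop \<Rightarrow> nat" where
  "pmin H = (LEAST k. \<exists>y \<in> neg_eigenspace H. y \<noteq> 0 \<and> k = min (ldim_A y) (ldim_B y))"

text \<open>M is supported on C^p (x) C^p: its range lies in U (x) V with dim U, dim V \<le> p.\<close>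
definition supported_pp :: "('a::finite, 'b::finite) bop \<Rightarrow> nat \<Rightarrow> bool" where
  "supported_pp M p \<longleftrightarrow> (\<exists>(u :: nat \<Rightarrow> complex ^ 'a::finite) (v :: nat \<Rightarrow> complex ^ 'b).
      range (\<lambda>x. M *v x) \<subseteq> cspan {tens (u i) (v j) | i j. i < p \<and> j < p})"

end

theory Submission
  imports Defs
begin


lemma cspan_eq: "cspan E = vec.span E"
  unfolding cspan_def vec.span_explicit vector_scalar_mult_def by blast

definition outer :: "complex ^ 'n::finite \<Rightarrow> complex ^ 'n \<Rightarrow> complex ^ 'n ^ 'n" where
  "outer u v = (\<chi> i j. u $ i * cnj (v $ j))"

definition cvec :: "complex ^ 'n::finite \<Rightarrow> complex ^ 'n" where
  "cvec v = (\<chi> i. cnj (v $ i))"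

definition cmat :: "complex ^ 'n::finite ^ 'm::finite \<Rightarrow> complex ^ 'n ^ 'm" where
  "cmat A = (\<chi> i j. cnj (A $ i $ j))"

lemma cinner_add_right: "cinner x (y + z) = cinner x y + cinner x z"
  by (simp add: cinner_def distrib_left sum.distrib)
lemma cinner_add_left: "cinner (x + y) z = cinner x z + cinner y z"
  by (simp add: cinner_def distrib_right sum.distrib)
lemma cinner_diff_right: "cinner x (y - z) = cinner x y - cinner x z"
  by (simp add: cinner_def right_diff_distrib sum_subtractf)
lemma cinner_diff_left: "cinner (x - y) z = cinner x z - cinner y z"
  by (simp add: cinner_def left_diff_distrib sum_subtractf)
lemma cinner_scale_right: "cinner x (c *s y) = c * cinner x y"
  by (simp add: cinner_def sum_distrib_left mult_ac)
lemma cinner_scale_left: "cinner (c *s x) y = cnj c * cinner x y"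
  by (simp add: cinner_def sum_distrib_left mult_ac)
lemma cinner_zero_left[simp]: "cinner 0 y = 0" by (simp add: cinner_def)
lemma cinner_zero_right[simp]: "cinner x 0 = 0" by (simp add: cinner_def)
lemma cinner_sum_right: "cinner x (sum f S) = (\<Sum>s\<in>S. cinner x (f s))"
  by (induction S rule: infinite_finite_induct) (auto simp: cinner_add_right)
lemma cinner_sum_left: "cinner (sum f S) y = (\<Sum>s\<in>S. cinner (f s) y)"
  by (induction S rule: infinite_finite_induct) (auto simp: cinner_add_left)
lemma cinner_cnj: "cnj (cinner x y) = cinner y x"
  by (simp add: cinner_def mult.commute)

lemma cinner_adj: "cinner x (M *v y) = cinner (adj M *v x) y"
  unfolding cinner_def adj_def matrix_vector_mult_def
  by (simp add: sum_distrib_left sum_distrib_right mult_ac cnj_sum) (rule sum.swap)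

lemma cinner_self: "cinner x x = of_real (\<Sum>i\<in>UNIV. (cmod (x $ i))\<^sup>2)"
  unfolding cinner_def of_real_sum by (intro sum.cong refl) (metis complex_norm_square mult.commute)

lemma cinner_self_ge0: "0 \<le> Re (cinner x x)"
  by (simp add: cinner_self sum_nonneg)

lemma cinner_self_eq0: "cinner x x = 0 \<longleftrightarrow> x = 0"
proof
  assume "cinner x x = 0"
  then have "(\<Sum>i\<in>UNIV. (cmod (x $ i))\<^sup>2) = 0" by (metis cinner_self of_real_eq_0_iff)
  then have "\<forall>i\<in>UNIV. (cmod (x $ i))\<^sup>2 = 0" by (subst (asm) sum_nonneg_eq_0_iff) auto
  then show "x = 0" by (simp add: vec_eq_iff)
qed simp

lemma cinner_self_Re_eq0: "Re (cinner x x) = 0 \<longleftrightarrow> x = 0"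
  using cinner_self_eq0[of x] cinner_self[of x] by (metis Re_complex_of_real of_real_0)

lemma adj_adj[simp]: "adj (adj M) = M"
  by (simp add: adj_def vec_eq_iff)

lemma adj_mult: "adj (A ** B) = adj B ** adj A"
  by (simp add: adj_def matrix_matrix_mult_def vec_eq_iff cnj_sum mult.commute)

lemma mv_scale: "(M::complex^'n::finite^'m::finite) *v (c *s x) = c *s (M *v x)"
  by (rule vector_scalar_commute)

lemma mv_add: "(M::complex^'n::finite^'m::finite) *v (x + y) = M *v x + M *v y"
  by (simp add: matrix_vector_right_distrib)
lemma mv_diff: "(M::complex^'n::finite^'m::finite) *v (x - y) = M *v x - M *v y"
  by (rule matrix_vector_mult_diff_distrib)
lemma mv_sum: "(M::complex^'n::finite^'m::finite) *v (sum f S) = (\<Sum>s\<in>S. M *v f s)"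
  by (induction S rule: infinite_finite_induct) (auto simp: mv_add)

lemma herm_quad_real: "hermitian M \<Longrightarrow> Im (cinner x (M *v x)) = 0"
proof -
  assume "hermitian M"
  then have "cnj (cinner x (M *v x)) = cinner x (M *v x)"
    by (metis cinner_adj cinner_cnj hermitian_def)
  then show ?thesis by (metis Reals_cnj_iff complex_is_Real_iff)
qed

lemma herm_sym: "hermitian M \<Longrightarrow> cinner x (M *v y) = cnj (cinner y (M *v x))"
  by (metis cinner_adj cinner_cnj hermitian_def)



lemma cinner_axis_mv: "cinner (axis i 1) ((M::complex^'n::finite^'n) *v axis j 1) = M $ i $ j"
proof -
  have "M *v axis j 1 = (\<chi> r. M $ r $ j)"
    by (simp add: matrix_vector_mult_def axis_def vec_eq_iff mult.commute[of "M $ _ $ _"] if_distrib[of "\<lambda>x. x * _"] sum.delta cong: if_cong)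
  then show ?thesis by (simp add: cinner_def axis_def if_distrib[of cnj] if_distrib[of "\<lambda>x. x * _"] sum.delta cong: if_cong)
qed

lemma herm_entry: "hermitian M \<Longrightarrow> M $ j $ i = cnj (M $ i $ j)"
  unfolding hermitian_def adj_def by (metis (no_types, lifting) complex_cnj_cnj vec_lambda_beta)

lemma psd_herm: "psd M \<Longrightarrow> hermitian M" by (simp add: psd_def)

lemma psd_diag: "psd (M::complex^'n::finite^'n) \<Longrightarrow> Im (M $ i $ i) = 0 \<and> 0 \<le> Re (M $ i $ i)"
  unfolding psd_def by (metis cinner_axis_mv)


lemma mult_cnj_sq: "z * cnj z = (of_real (cmod z))\<^sup>2"
  by (metis complex_norm_square of_real_power)

lemma quad_expand:
  "cinner (a + b) ((M::complex^'n::finite^'n) *v (a + b)) =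
     cinner a (M *v a) + cinner a (M *v b) + cinner b (M *v a) + cinner b (M *v b)"
  by (simp add: mv_add cinner_add_left cinner_add_right)

lemma psd_zero_diag:
  assumes "psd (M::complex^'n::finite^'n)" "\<forall>i. M $ i $ i = 0"
  shows "M = 0"
proof -
  have "M $ i $ j = 0" for i j
  proof (cases "i = j")
    case True then show ?thesis using assms by simp
  next
    case False
    define t where "t = - cnj (M $ i $ j)"
    let ?x = "axis i 1 + t *s axis j 1"
    have h: "M $ j $ i = cnj (M $ i $ j)" using assms(1) herm_entry psd_herm by blast
    have "cinner ?x (M *v ?x) = t * M $ i $ j + cnj t * M $ j $ i"
      unfolding quad_expand using assms(2)
      by (simp add: mv_scale cinner_scale_left cinner_scale_right cinner_axis_mv)
    also have "\<dots> = - 2 * of_real ((cmod (M $ i $ j))\<^sup>2)"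
      by (simp add: t_def h mult_cnj_sq mult.commute)
    finally have "Re (cinner ?x (M *v ?x)) = - 2 * (cmod (M $ i $ j))\<^sup>2" by simp
    moreover have "0 \<le> Re (cinner ?x (M *v ?x))" using assms(1) psd_def by blast
    ultimately show ?thesis by simp
  qed
  then show ?thesis by (simp add: vec_eq_iff)
qed

lemma psd_trace: "psd (M::complex^'n::finite^'n) \<Longrightarrow> Im (trace M) = 0 \<and> 0 \<le> Re (trace M)"
proof -
  assume a: "psd M"
  have "(\<Sum>i\<in>UNIV. Im (M $ i $ i)) = 0" using psd_diag[OF a] by (simp add: sum.neutral)
  moreover have "0 \<le> (\<Sum>i\<in>UNIV. Re (M $ i $ i))" using psd_diag[OF a] by (simp add: sum_nonneg)
  ultimately show ?thesis unfolding trace_def by (simp add: Re_sum Im_sum)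
qed

lemma psd_trace_zero: assumes "psd (M::complex^'n::finite^'n)" "Re (trace M) = 0" shows "M = 0"
proof -
  have "\<forall>i\<in>UNIV. Re (M $ i $ i) = 0"
    using assms psd_diag unfolding trace_def Re_sum
    by (subst sum_nonneg_eq_0_iff[symmetric]) auto
  then have "\<forall>i. M $ i $ i = 0" using psd_diag[OF assms(1)] by (simp add: complex_eq_iff)
  then show ?thesis using psd_zero_diag assms by blast
qed

lemma psd_trace_pos: "psd (M::complex^'n::finite^'n) \<Longrightarrow> M \<noteq> 0 \<Longrightarrow> 0 < Re (trace M)"
  using psd_trace psd_trace_zero by (metis order_le_less)

lemma psd_trace_real: "psd (M::complex^'n::finite^'n) \<Longrightarrow> trace M = of_real (Re (trace M))"
  using psd_trace[of M] by (simp add: complex_eq_iff)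

lemma cinner_outer: "cinner x (outer u v *v y) = cinner x u * cinner v y"
  unfolding cinner_def outer_def matrix_vector_mult_def
  apply (simp add: sum_distrib_left sum_distrib_right mult_ac)
  by (rule sum.swap)

lemma psd_outer: "psd (outer v v)"
proof -
  have "cinner x (outer v v *v x) = of_real ((cmod (cinner v x))\<^sup>2)" for x
  proof -
    have "cinner x v = cnj (cinner v x)" by (simp add: cinner_cnj)
    then show ?thesis by (simp add: cinner_outer mult_cnj_sq mult.commute)
  qed
  moreover have "hermitian (outer v v)"
    by (simp add: hermitian_def adj_def outer_def vec_eq_iff mult.commute)
  ultimately show ?thesis unfolding psd_def by simp
qed

lemma scaleR_entry: "(c *\<^sub>R A) $ i $ j = of_real c * (A $ i $ j :: complex)"
  unfolding vector_scaleR_component by (simp add: scaleR_conv_of_real)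

lemma adj_add: "adj (A + B) = adj A + adj B" by (simp add: adj_def vec_eq_iff)
lemma adj_zero[simp]: "adj 0 = 0" by (simp add: adj_def vec_eq_iff)
lemma adj_scaleR: "adj (c *\<^sub>R A) = c *\<^sub>R adj A" by (simp add: adj_def vec_eq_iff scaleR_entry)

lemma psd_add: assumes "psd A" "psd B" shows "psd (A + B)"
  using assms unfolding psd_def hermitian_def
  by (simp add: adj_add matrix_vector_mult_add_rdistrib cinner_add_right)

lemma psd_zero: "psd 0"
  by (simp add: psd_def hermitian_def)

lemma psd_sum: "(\<And>i. i \<in> S \<Longrightarrow> psd (f i)) \<Longrightarrow> psd (sum f S)"
  by (induction S rule: infinite_finite_induct) (auto simp: psd_zero psd_add)

lemma mv_scaleR_mat: "(c *\<^sub>R A) *v x = (of_real c::complex) *s (A *v x)"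
  apply (simp add: matrix_vector_mult_def vector_scalar_mult_def vec_eq_iff sum_distrib_left scaleR_entry mult_ac)
  by (simp add: scaleR_conv_of_real mult_ac)

lemma psd_scaleR: assumes "psd A" "0 \<le> c" shows "psd (c *\<^sub>R A)"
  using assms unfolding psd_def hermitian_def
  by (simp add: adj_scaleR mv_scaleR_mat cinner_scale_right mult_nonneg_nonneg)

lemma mm_mv: "(A ** B) *v x = A *v (B *v x)"
  by (simp add: matrix_vector_mul_assoc)

lemma psd_congr: assumes "psd H" shows "psd (X ** H ** adj X)"
proof -
  have "hermitian (X ** H ** adj X)" using assms unfolding psd_def hermitian_def
    by (simp add: adj_mult matrix_mul_assoc)
  moreover have "cinner x ((X ** H ** adj X) *v x) = cinner (adj X *v x) (H *v (adj X *v x))" for x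
    by (simp add: mm_mv cinner_adj)
  ultimately show ?thesis using assms unfolding psd_def by simp
qed



lemma outer_mv: "outer u v *v x = cinner v x *s u"
  by (simp add: outer_def matrix_vector_mult_def cinner_def vector_scalar_mult_def vec_eq_iff sum_distrib_left sum_distrib_right mult_ac)

lemma cinner_axis_left: "cinner (axis i 1) v = v $ i"
  by (simp add: cinner_def axis_def if_distrib[of cnj] if_distrib[of "\<lambda>x. x * _"] sum.delta cong: if_cong)

lemma mv_axis: "(M::complex^'n::finite^'m::finite) *v axis i 1 = (\<chi> r. M $ r $ i)"
  by (simp add: matrix_vector_mult_def axis_def vec_eq_iff mult.commute[of "M $ _ $ _"] if_distrib[of "\<lambda>x. x * _"] sum.delta cong: if_cong)

lemma adj_diff: "adj (A - B) = adj A - adj B" by (simp add: adj_def vec_eq_iff)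

lemma herm_diff: "hermitian A \<Longrightarrow> hermitian B \<Longrightarrow> hermitian (A - B)"
  by (simp add: hermitian_def adj_diff)

lemma psd_step:
  fixes M :: "complex^'n::finite^'n"
  assumes psd: "psd M" and nz: "M $ i $ i \<noteq> 0"
  obtains w where "psd (M - outer w w)"
    "{r. (M - outer w w) $ r $ r \<noteq> 0} \<subseteq> {r. M $ r $ r \<noteq> 0} - {i}"
proof -
  have herm: "hermitian M" using psd psd_herm by blast
  define m where "m = Re (M $ i $ i)"
  have Mii: "M $ i $ i = of_real m" using psd_diag[OF psd, of i] by (simp add: m_def complex_eq_iff)
  have mpos: "0 < m" using psd_diag[OF psd, of i] nz Mii by force
  define a where "a = 1 / sqrt m"
  define c where "c = M *v axis i 1"
  define w where "w = (of_real a :: complex) *s c"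
  define M' where "M' = M - outer w w"
  have a2: "a * a = 1 / m" using mpos by (simp add: a_def)
  have cx: "cinner c x = (M *v x) $ i" for x
  proof -
    have "cinner c x = cinner (axis i 1) (adj M *v x)" unfolding c_def cinner_adj adj_adj
      using herm_sym[OF herm] cinner_cnj by (metis cinner_adj)
    then show ?thesis using herm by (simp add: hermitian_def cinner_axis_left)
  qed
  have M'x: "M' *v x = M *v (x - ((M *v x) $ i / M $ i $ i) *s axis i 1)" for x
  proof -
    have "outer w w *v x = cinner w x *s w" by (rule outer_mv)
    also have "\<dots> = (of_real (a * a) * (M *v x) $ i) *s c"
    proof -
      have "cinner w x = of_real a * (M *v x) $ i" by (simp add: w_def cinner_scale_left cx)
      then show ?thesis by (simp add: w_def vector_scalar_mult_def vec_eq_iff mult_ac)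
    qed
    also have "\<dots> = M *v (((M *v x) $ i / M $ i $ i) *s axis i 1)"
      by (simp add: c_def mv_scale a2 Mii divide_inverse mult.commute)
    finally show ?thesis by (simp add: M'_def matrix_vector_mult_diff_rdistrib mv_diff)
  qed
  have quad: "cinner x (M' *v x) = cinner y (M *v y)"
    if "y = x - ((M *v x) $ i / M $ i $ i) *s axis i 1" for x y
  proof -
    let ?s = "(M *v x) $ i / M $ i $ i"
    have xy: "x = y + ?s *s axis i 1" using that by simp
    have "(M *v y) $ i = 0" using that nz by (simp add: mv_diff mv_scale mv_axis)
    then have "cinner (axis i 1) (M *v y) = 0" by (simp add: cinner_axis_left)
    then show ?thesis unfolding M'x[of x] that[symmetric]
      by (subst (1) xy) (simp add: cinner_add_left cinner_scale_left)
  qed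
  have hM': "hermitian M'" unfolding M'_def
    by (rule herm_diff[OF herm]) (simp add: psd_outer psd_herm)
  have psdM': "psd M'" unfolding psd_def
    using hM' quad psd unfolding psd_def by (metis herm_quad_real)
  have diag: "M' $ r $ r = M $ r $ r - of_real ((cmod (w $ r))\<^sup>2)" for r
    by (simp add: M'_def outer_def mult_cnj_sq)
  have "M' $ i $ i = 0"
  proof -
    have "w $ i = of_real (a * m)" by (simp add: w_def c_def mv_axis Mii vector_scalar_mult_def)
    then have "(cmod (w $ i))\<^sup>2 = (a * m)\<^sup>2" by (simp only: norm_of_real power2_abs)
    also have "\<dots> = (a * a) * (m * m)" by (simp add: power2_eq_square mult_ac)
    also have "\<dots> = m" using a2 mpos by simp
    finally show ?thesis using diag[of i] Mii by simp
  qed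
  moreover have "M' $ r $ r = 0" if "M $ r $ r = 0" for r
  proof -
    have "Re (M' $ r $ r) \<le> 0" using diag[of r] that by simp
    then show ?thesis using psd_diag[OF psdM', of r] by (simp add: complex_eq_iff)
  qed
  ultimately have "{r. M' $ r $ r \<noteq> 0} \<subseteq> {r. M $ r $ r \<noteq> 0} - {i}" by auto
  then show ?thesis using that psdM' unfolding M'_def by blast
qed

lemma psd_decomp_aux:
  "\<forall>M::complex^'n::finite^'n. card {r. M $ r $ r \<noteq> 0} = n \<longrightarrow> psd M \<longrightarrow>
     (\<exists>(N::nat) v. M = (\<Sum>k<N. outer (v k) (v k)))"
proof (induction n rule: less_induct)
  case (less n)
  show ?case
  proof (intro allI impI)
    fix M :: "complex^'n^'n"
    assume cn: "card {r. M $ r $ r \<noteq> 0} = n" and psd: "psd M"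
    show "\<exists>(N::nat) v. M = (\<Sum>k<N. outer (v k) (v k))"
    proof (cases "\<forall>i. M $ i $ i = 0")
      case True
      then have "M = 0" using psd_zero_diag psd by blast
      then show ?thesis by (intro exI[of _ 0]) simp
    next
      case False
      then obtain i where nz: "M $ i $ i \<noteq> 0" by blast
      obtain w where p: "psd (M - outer w w)"
        and s: "{r. (M - outer w w) $ r $ r \<noteq> 0} \<subseteq> {r. M $ r $ r \<noteq> 0} - {i}"
        using psd_step[OF psd nz] by blast
      have "card {r. (M - outer w w) $ r $ r \<noteq> 0} < n"
        unfolding cn[symmetric] using nz by (intro psubset_card_mono) (use s in auto)
      then obtain N :: nat and v where e: "M - outer w w = (\<Sum>k<N. outer (v k) (v k))"
        using less.IH p by blast
      have "M = (\<Sum>k<Suc N. outer ((v(N := w)) k) ((v(N := w)) k))"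
        using e by (simp add: algebra_simps)
      then show ?thesis by blast
    qed
  qed
qed

lemma psd_decomp: "psd (M::complex^'n::finite^'n) \<Longrightarrow> \<exists>(N::nat) v. M = (\<Sum>k<N. outer (v k) (v k))"
  using psd_decomp_aux by blast



lemma sum_pair_UNIV: "(\<Sum>x\<in>(UNIV::('a::finite \<times> 'b::finite) set). f x) = (\<Sum>a\<in>UNIV. \<Sum>b\<in>UNIV. f (a, b))"
  by (simp add: sum.cartesian_product UNIV_Times_UNIV[symmetric] del: UNIV_Times_UNIV)

lemma kron_mult: "kron A B ** kron C D = kron (A ** C) (B ** D)"
  unfolding kron_def matrix_matrix_mult_def
  by (simp add: vec_eq_iff sum_pair_UNIV sum_product mult_ac)

lemma adj_kron: "adj (kron A B) = kron (adj A) (adj B)"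
  by (simp add: adj_def kron_def vec_eq_iff)

lemma trace_kron: "trace (kron A B) = trace A * trace B"
  by (simp add: trace_def kron_def sum_pair_UNIV sum_product)

lemma kron_outer: "kron (outer a b) (outer c d) = outer (tens a c) (tens b d)"
  by (simp add: kron_def outer_def tens_def vec_eq_iff mult_ac)

lemma kron_sum_left: "kron (sum f S) B = (\<Sum>s\<in>S. kron (f s) B)"
  by (induction S rule: infinite_finite_induct)
     (auto simp: kron_def vec_eq_iff distrib_right)

lemma kron_sum_right: "kron A (sum f S) = (\<Sum>s\<in>S. kron A (f s))"
  by (induction S rule: infinite_finite_induct)
     (auto simp: kron_def vec_eq_iff distrib_left)

lemma kron_zero_left[simp]: "kron 0 B = 0" by (simp add: kron_def vec_eq_iff)
lemma kron_zero_right[simp]: "kron A 0 = 0" by (simp add: kron_def vec_eq_iff)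

lemma kron_scaleR: "kron (a *\<^sub>R A) (b *\<^sub>R B) = (a * b) *\<^sub>R kron A B"
  by (simp add: kron_def vec_eq_iff scaleR_entry mult_ac)

lemma psd_kron: assumes "psd A" "psd B" shows "psd (kron A B)"
proof -
  obtain N u where u: "A = (\<Sum>k<(N::nat). outer (u k) (u k))" using psd_decomp[OF assms(1)] by blast
  obtain K v where v: "B = (\<Sum>k<(K::nat). outer (v k) (v k))" using psd_decomp[OF assms(2)] by blast
  have "kron A B = (\<Sum>j<K. \<Sum>k<N. outer (tens (u k) (v j)) (tens (u k) (v j)))"
    unfolding u v kron_sum_left kron_sum_right kron_outer ..
  then show ?thesis by (simp add: psd_sum psd_outer)
qed

lemma mm_sum_right: "(W::complex^'n::finite^'m::finite) ** sum f S = (\<Sum>s\<in>S. W ** f s)"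
  by (induction S rule: infinite_finite_induct) (auto simp: matrix_add_ldistrib)

lemma mm_sum_left: "sum f S ** (W::complex^'n::finite^'m::finite) = (\<Sum>s\<in>S. f s ** W)"
  by (induction S rule: infinite_finite_induct) (auto simp: matrix_matrix_mult_def vec_eq_iff distrib_right sum.distrib)

lemma trace_sum: "trace (sum f S) = (\<Sum>s\<in>S. trace (f s :: complex^'n::finite^'n))"
  unfolding trace_def by (simp add: sum_component) (rule sum.swap)

lemma trace_outer: "trace (W ** outer v v) = cinner v (W *v v)"
  unfolding trace_def matrix_matrix_mult_def outer_def cinner_def matrix_vector_mult_def
  by (simp add: sum_distrib_left mult_ac)

lemma trace_psd_nonneg:
  assumes "\<forall>x. 0 \<le> Re (cinner x (W *v x))" "psd \<sigma>"
  shows "0 \<le> Re (trace (W ** \<sigma>))"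
proof -
  obtain N v where v: "\<sigma> = (\<Sum>k<(N::nat). outer (v k) (v k))" using psd_decomp[OF assms(2)] by blast
  show ?thesis unfolding v mm_sum_right trace_sum trace_outer Re_sum
    using assms(1) by (simp add: sum_nonneg)
qed



lemma scaleR_as_s: "r *\<^sub>R (x::complex^'n::finite) = (of_real r::complex) *s x"
  unfolding vec_eq_iff vector_scaleR_component vector_scalar_mult_def by (simp add: scaleR_conv_of_real)

lemma cinner_self_norm: "Re (cinner x x) = (norm x)\<^sup>2"
proof -
  have "(norm x)\<^sup>2 = (\<Sum>i\<in>UNIV. (cmod (x $ i))\<^sup>2)"
    unfolding norm_vec_def L2_set_def by (simp add: sum_nonneg)
  then show ?thesis by (simp add: cinner_self)
qed

lemma quad_scale_real: "cinner (r *\<^sub>R x) ((H::complex^'n::finite^'n) *v (r *\<^sub>R x)) = of_real (r * r) * cinner x (H *v x)"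
  by (simp add: scaleR_as_s mv_scale cinner_scale_left cinner_scale_right)

lemma quad_expand_scale:
  "cinner (x + c *s z) ((G::complex^'n::finite^'n) *v (x + c *s z)) = cinner x (G *v x) + c * cinner x (G *v z)
     + cnj c * cinner z (G *v x) + cnj c * c * cinner z (G *v z)"
  unfolding quad_expand by (simp add: mv_scale cinner_scale_left cinner_scale_right)

lemma psd_form_kernel:
  fixes G :: "complex^'n::finite^'n"
  assumes herm: "hermitian G" and nn: "\<forall>x. 0 \<le> Re (cinner x (G *v x))"
    and z0: "Re (cinner x0 (G *v x0)) = 0"
  shows "G *v x0 = 0"
proof (rule ccontr)
  define z where "z = G *v x0"
  assume "G *v x0 \<noteq> 0"
  then have "z \<noteq> 0" by (simp add: z_def)
  define a where "a = Re (cinner z z)"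
  have apos: "0 < a" using \<open>z \<noteq> 0\<close> cinner_self_ge0[of z] cinner_self_Re_eq0[of z] a_def by linarith
  define b where "b = Re (cinner z (G *v z))"
  define t where "t = a / (\<bar>b\<bar> + 1)"
  have tpos: "0 < t" using apos by (simp add: t_def)
  let ?x = "x0 + (of_real (- t)::complex) *s z"
  have e: "cinner ?x (G *v ?x) = cinner x0 (G *v x0) + of_real (- t) * cinner x0 (G *v z)
      + of_real (- t) * cinner z (G *v x0) + of_real (t * t) * cinner z (G *v z)"
    unfolding quad_expand_scale by simp
  have r1: "Re (cinner x0 (G *v z)) = a"
    using herm_sym[OF herm, of x0 z] by (simp add: a_def z_def)
  have "Re (cinner ?x (G *v ?x)) = - 2 * t * a + t * t * b"
    unfolding e using z0 r1 by (simp add: a_def b_def z_def)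
  moreover have "t * b < 2 * a"
  proof -
    have "t * b \<le> t * \<bar>b\<bar>" using tpos by (simp add: mult_left_mono)
    also have "\<dots> < a" using apos by (simp add: t_def field_simps)
    finally show ?thesis using apos by simp
  qed
  then have "t * (t * b) < t * (2 * a)" using tpos by simp
  ultimately have "Re (cinner ?x (G *v ?x)) < 0" by (simp add: algebra_simps)
  then show False using nn by (meson not_le)
qed

lemma neg_eigvec_exists:
  fixes H :: "complex^'n::finite^'n"
  assumes herm: "hermitian H" and neg: "Re (cinner x1 (H *v x1)) < 0"
  shows "\<exists>v lam. v \<noteq> 0 \<and> lam < 0 \<and> H *v v = (\<chi> i. of_real lam * v $ i)"
proof -
  let ?f = "\<lambda>x::complex^'n. Re (cinner x (H *v x))"
  have cont: "continuous_on (sphere 0 1) ?f"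
    unfolding cinner_def matrix_vector_mult_def by (intro continuous_intros)
  have ne: "sphere (0::complex^'n) 1 \<noteq> {}"
  proof -
    have "axis undefined 1 \<in> sphere (0::complex^'n) 1" by simp
    then show ?thesis by blast
  qed
  obtain x0 where x0: "x0 \<in> sphere 0 1" and min: "\<forall>y\<in>sphere 0 1. ?f x0 \<le> ?f y"
    using continuous_attains_inf[OF compact_sphere ne cont] by blast
  define mu where "mu = ?f x0"
  have nx0: "norm x0 = 1" using x0 by simp
  have bound: "mu * (norm x)\<^sup>2 \<le> ?f x" for x
  proof (cases "x = 0")
    case True then show ?thesis by simp
  next
    case False
    then have np: "0 < norm x" by simp
    define y where "y = (1 / norm x) *\<^sub>R x"
    have "y \<in> sphere 0 1" using np by (simp add: y_def)
    then have "mu \<le> ?f y" using min mu_def by blast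
    also have "?f y = (1 / norm x) * (1 / norm x) * ?f x"
      unfolding y_def quad_scale_real by simp
    finally have "mu * (norm x * norm x) \<le> ?f x" using np by (simp add: field_simps)
    then show ?thesis by (simp add: power2_eq_square)
  qed
  have x1nz: "x1 \<noteq> 0" using neg by auto
  have "mu * (norm x1)\<^sup>2 < 0" using bound[of x1] neg by linarith
  then have mneg: "mu < 0" using x1nz by (simp add: mult_less_0_iff)
  define G where "G = H - mu *\<^sub>R mat 1"
  have Gv: "G *v x = H *v x - (of_real mu::complex) *s x" for x
    by (simp add: G_def matrix_vector_mult_diff_rdistrib mv_scaleR_mat)
  have qG: "Re (cinner x (G *v x)) = ?f x - mu * (norm x)\<^sup>2" for x
    by (simp add: Gv cinner_diff_right cinner_scale_right cinner_self_norm[symmetric])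
  have hG: "hermitian G" using herm
    by (simp add: G_def hermitian_def adj_diff adj_scaleR adj_def mat_def vec_eq_iff)
  have "G *v x0 = 0"
    by (rule psd_form_kernel[OF hG]) (use qG bound nx0 mu_def in auto)
  then have "H *v x0 = (\<chi> i. of_real mu * x0 $ i)"
    by (simp add: Gv vector_scalar_mult_def)
  moreover have "x0 \<noteq> 0" using nx0 by auto
  ultimately show ?thesis using mneg by blast
qed



lemma scale_sum: "(c::complex) *s sum f S = (\<Sum>s\<in>S. c *s (f s :: complex^'n::finite))"
  by (induction S rule: infinite_finite_induct) (auto simp: vector_sadd_rdistrib vector_add_ldistrib)

lemma neg_space_neg:
  fixes H :: "complex^'n::finite^'n"
  assumes herm: "hermitian H" and yin: "y \<in> neg_eigenspace H" and ynz: "y \<noteq> 0"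
  shows "Re (cinner y (H *v y)) < 0"
proof -
  let ?E = "{v. v \<noteq> 0 \<and> (\<exists>lam::real. lam < 0 \<and> H *v v = (\<chi> i. of_real lam * v $ i))}"
  obtain S c where S: "finite S" "S \<subseteq> ?E" and y: "y = (\<Sum>v\<in>S. (\<chi> i. c v * v $ i))"
    using yin unfolding neg_eigenspace_def cspan_def by blast
  have y': "y = (\<Sum>v\<in>S. c v *s v)" using y by (simp add: vector_scalar_mult_def)
  define lam where "lam v = (SOME l::real. l < 0 \<and> H *v v = (\<chi> i. of_real l * v $ i))" for v
  have lamv: "lam v < 0 \<and> H *v v = (of_real (lam v)::complex) *s v" if "v \<in> S" for v
  proof -
    have "\<exists>l::real. l < 0 \<and> H *v v = (\<chi> i. of_real l * v $ i)" using S that by blast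
    then have "lam v < 0 \<and> H *v v = (\<chi> i. of_real (lam v) * v $ i)"
      unfolding lam_def by (rule someI_ex)
    then show ?thesis by (simp add: vector_scalar_mult_def)
  qed
  define L where "L = lam ` S"
  define Y where "Y l = (\<Sum>v\<in>{v\<in>S. lam v = l}. c v *s v)" for l
  have finL: "finite L" using S by (simp add: L_def)
  have ysum: "y = (\<Sum>l\<in>L. Y l)" unfolding y' Y_def L_def by (rule sum.image_gen[OF S(1)])
  have HY: "H *v Y l = (of_real l::complex) *s Y l" for l
  proof -
    have "H *v Y l = (\<Sum>v\<in>{v\<in>S. lam v = l}. c v *s (H *v v))"
      by (simp add: Y_def mv_sum mv_scale)
    also have "\<dots> = (\<Sum>v\<in>{v\<in>S. lam v = l}. (of_real l::complex) *s (c v *s v))"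
      by (intro sum.cong refl) (simp add: lamv vector_smult_assoc mult.commute)
    also have "\<dots> = (of_real l::complex) *s Y l" by (simp add: Y_def scale_sum)
    finally show ?thesis .
  qed
  have orth: "cinner (Y l) (Y m) = 0" if "l \<noteq> m" for l m
  proof -
    have a: "cinner (Y l) (H *v Y m) = of_real m * cinner (Y l) (Y m)"
      by (simp add: HY cinner_scale_right)
    have "cinner (Y l) (H *v Y m) = cnj (cinner (Y m) (H *v Y l))"
      by (rule herm_sym[OF herm])
    also have "\<dots> = of_real l * cinner (Y l) (Y m)"
      by (simp add: HY cinner_scale_right cinner_cnj)
    finally have b: "cinner (Y l) (H *v Y m) = of_real l * cinner (Y l) (Y m)" .
    from a b have "(of_real m - of_real l) * cinner (Y l) (Y m) = 0"
      by (simp add: algebra_simps) blast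
    then show ?thesis using that by simp
  qed
  have "cinner y (H *v y) = (\<Sum>l\<in>L. \<Sum>m\<in>L. cinner (Y l) (H *v Y m))"
    unfolding ysum by (simp add: mv_sum cinner_sum_left cinner_sum_right) (rule sum.swap)
  also have "\<dots> = (\<Sum>l\<in>L. \<Sum>m\<in>L. if m = l then of_real l * cinner (Y l) (Y l) else 0)"
    by (intro sum.cong refl) (auto simp: HY cinner_scale_right orth)
  also have "\<dots> = (\<Sum>l\<in>L. of_real l * cinner (Y l) (Y l))"
    using finL by (simp add: sum.delta)
  finally have q: "Re (cinner y (H *v y)) = (\<Sum>l\<in>L. l * Re (cinner (Y l) (Y l)))"
    by (simp add: Re_sum)
  have Lneg: "l < 0" if "l \<in> L" for l using that lamv by (auto simp: L_def)
  have nonpos: "l * Re (cinner (Y l) (Y l)) \<le> 0" if "l \<in> L" for l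
    using Lneg[OF that] cinner_self_ge0[of "Y l"] by (simp add: mult_nonpos_nonneg)
  have "\<exists>l0\<in>L. Y l0 \<noteq> 0"
  proof (rule ccontr)
    assume "\<not> ?thesis"
    then have "\<forall>l\<in>L. Y l = 0" by blast
    then have "y = 0" unfolding ysum by simp
    then show False using ynz by simp
  qed
  then obtain l0 where l0: "l0 \<in> L" "Y l0 \<noteq> 0" by blast
  have neg0: "l0 * Re (cinner (Y l0) (Y l0)) < 0"
  proof -
    have "0 < Re (cinner (Y l0) (Y l0))"
      using l0(2) cinner_self_ge0[of "Y l0"] cinner_self_Re_eq0[of "Y l0"] by linarith
    then show ?thesis using Lneg[OF l0(1)] by (simp add: mult_neg_pos)
  qed
  have "(\<Sum>l\<in>L. l * Re (cinner (Y l) (Y l))) = l0 * Re (cinner (Y l0) (Y l0))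
      + (\<Sum>l\<in>L - {l0}. l * Re (cinner (Y l) (Y l)))"
    using finL l0(1) by (simp add: sum.remove)
  also have "(\<Sum>l\<in>L - {l0}. l * Re (cinner (Y l) (Y l))) \<le> 0"
    using nonpos by (intro sum_nonpos) auto
  ultimately show ?thesis using q neg0 by linarith
qed



lemma tens_add_right: "tens u (v + w) = tens u v + tens u w"
  by (simp add: tens_def vec_eq_iff distrib_left)
lemma tens_add_left: "tens (u + v) w = tens u w + tens v w"
  by (simp add: tens_def vec_eq_iff distrib_right)
lemma tens_scale_right: "c *s tens u v = tens u (c *s v)"
  by (simp add: tens_def vec_eq_iff vector_scalar_mult_def mult_ac)
lemma tens_scale_left: "c *s tens u v = tens (c *s u) v"
  by (simp add: tens_def vec_eq_iff vector_scalar_mult_def mult_ac)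
lemma tens_zero_right[simp]: "tens u 0 = 0" by (simp add: tens_def vec_eq_iff)
lemma tens_zero_left[simp]: "tens 0 v = 0" by (simp add: tens_def vec_eq_iff)

lemma span_tensA:
  fixes u :: "nat \<Rightarrow> complex^'a::finite"
  assumes "y \<in> vec.span {tens (u i) (w::complex^'b::finite) | i w. i < m}"
  shows "\<exists>b. y = (\<Sum>i<m. tens (u i) (b i))"
  using assms
proof (induction rule: vec.span_induct_alt)
  case base
  show ?case by (intro exI[of _ "\<lambda>_. 0"]) simp
next
  case (step c x y)
  then obtain i w where x: "x = tens (u i) w" "i < m" by blast
  from step obtain b where b: "y = (\<Sum>i<m. tens (u i) (b i))" by blast
  define b' where "b' j = (if j = i then c *s w else 0) + b j" for j
  have "(\<Sum>j<m. tens (u j) (b' j)) = (\<Sum>j<m. (if j = i then tens (u i) (c *s w) else 0)) + y"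
    by (simp add: b'_def tens_add_right b sum.distrib if_distrib[of "tens _"] cong: if_cong)
  also have "\<dots> = c *s x + y" using x by (simp add: sum.delta tens_scale_right)
  finally show ?case by metis
qed

lemma span_tensB:
  fixes v :: "nat \<Rightarrow> complex^'b::finite"
  assumes "y \<in> vec.span {tens (w::complex^'a::finite) (v j) | j w. j < n}"
  shows "\<exists>a. y = (\<Sum>j<n. tens (a j) (v j))"
  using assms
proof (induction rule: vec.span_induct_alt)
  case base
  show ?case by (intro exI[of _ "\<lambda>_. 0"]) simp
next
  case (step c x y)
  then obtain i w where x: "x = tens w (v i)" "i < n" by blast
  from step obtain b where b: "y = (\<Sum>i<n. tens (b i) (v i))" by blast
  define b' where "b' j = (if j = i then c *s w else 0) + b j" for j
  have "(\<Sum>j<n. tens (b' j) (v j)) = (\<Sum>j<n. (if j = i then tens (c *s w) (v i) else 0)) + y"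
    by (simp add: b'_def tens_add_left b sum.distrib if_distrib[of "\<lambda>z. tens z _"] cong: if_cong)
  also have "\<dots> = c *s x + y" using x by (simp add: sum.delta tens_scale_left)
  finally show ?case by metis
qed

lemma vec_decompA: "(y::complex^('a::finite \<times> 'b::finite)) = (\<Sum>r\<in>UNIV. tens (axis r 1) (\<chi> c. y $ (r, c)))"
  by (simp add: vec_eq_iff sum_component tens_def axis_def if_distrib[of "\<lambda>x. x * _"] sum.delta cong: if_cong)

lemma vec_decompB: "(y::complex^('a::finite \<times> 'b::finite)) = (\<Sum>c\<in>UNIV. tens (\<chi> r. y $ (r, c)) (axis c 1))"
  by (simp add: vec_eq_iff sum_component tens_def axis_def if_distrib[of "\<lambda>x. _ * x"] sum.delta cong: if_cong)

lemma ldimA_le: "ldim_A (y::complex^('a::finite \<times> 'b::finite)) \<le> CARD('a)"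
  and ldimA_ex: "\<exists>u::nat \<Rightarrow> complex^'a. y \<in> cspan {tens (u i) w | i w. i < ldim_A y}"
proof -
  obtain h where h: "bij_betw h {0..<CARD('a)} (UNIV::'a set)"
    using ex_bij_betw_nat_finite[of "UNIV::'a set"] by auto
  define u where "u i = (axis (h i) 1 :: complex^'a)" for i
  have "y \<in> cspan {tens (u i) w | i w. i < CARD('a)}"
  proof -
    have "tens (axis r 1) (\<chi> c. y $ (r, c)) \<in> {tens (u i) w | i w. i < CARD('a)}" for r
    proof -
      obtain i where "i < CARD('a)" "h i = r" using h by (metis atLeastLessThan_iff bij_betw_iff_bijections UNIV_I)
      then show ?thesis unfolding u_def by blast
    qed
    then show ?thesis unfolding cspan_eq
      by (subst vec_decompA) (intro vec.span_sum vec.span_base)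
  qed
  then have ex: "\<exists>m u. y \<in> cspan {tens ((u::nat \<Rightarrow> complex^'a) i) w | i w. i < m}" by blast
  show "ldim_A y \<le> CARD('a)" unfolding ldim_A_def
    by (rule Least_le) (use \<open>y \<in> cspan _\<close> in blast)
  show "\<exists>u::nat \<Rightarrow> complex^'a. y \<in> cspan {tens (u i) w | i w. i < ldim_A y}"
    unfolding ldim_A_def by (rule LeastI_ex) (use ex in blast)
qed

lemma ldimB_le: "ldim_B (y::complex^('a::finite \<times> 'b::finite)) \<le> CARD('b)"
  and ldimB_ex: "\<exists>v::nat \<Rightarrow> complex^'b. y \<in> cspan {tens w (v j) | j w. j < ldim_B y}"
proof -
  obtain h where h: "bij_betw h {0..<CARD('b)} (UNIV::'b set)"
    using ex_bij_betw_nat_finite[of "UNIV::'b set"] by auto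
  define u where "u i = (axis (h i) 1 :: complex^'b)" for i
  have "y \<in> cspan {tens w (u i) | i w. i < CARD('b)}"
  proof -
    have "tens (\<chi> r. y $ (r, c)) (axis c 1) \<in> {tens w (u i) | i w. i < CARD('b)}" for c
    proof -
      obtain i where "i < CARD('b)" "h i = c" using h by (metis atLeastLessThan_iff bij_betw_iff_bijections UNIV_I)
      then show ?thesis unfolding u_def by blast
    qed
    then show ?thesis unfolding cspan_eq
      by (subst vec_decompB) (intro vec.span_sum vec.span_base)
  qed
  then have ex: "\<exists>m u. y \<in> cspan {tens w ((u::nat \<Rightarrow> complex^'b) i) | i w. i < m}" by blast
  show "ldim_B y \<le> CARD('b)" unfolding ldim_B_def
    by (rule Least_le) (use \<open>y \<in> cspan _\<close> in blast)
  show "\<exists>v::nat \<Rightarrow> complex^'b. y \<in> cspan {tens w (v j) | j w. j < ldim_B y}"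
    unfolding ldim_B_def by (rule LeastI_ex) (use ex in blast)
qed

lemma pmin_witness:
  fixes H :: "complex^('a::finite \<times> 'b::finite)^('a \<times> 'b)"
  assumes herm: "hermitian H" and neg: "Re (cinner x1 (H *v x1)) < 0"
  shows "\<exists>a b. Re (cinner (\<Sum>i<pmin H. tens (a i) (b i)) (H *v (\<Sum>i<pmin H. tens (a i) (b i)))) < 0
     \<and> pmin H \<le> CARD('a) \<and> pmin H \<le> CARD('b)"
proof -
  obtain v lam where v: "v \<noteq> 0" "lam < 0" "H *v v = (\<chi> i. of_real lam * v $ i)"
    using neg_eigvec_exists[OF herm neg] by blast
  have "v \<in> neg_eigenspace H" unfolding neg_eigenspace_def cspan_eq
    by (rule vec.span_base) (use v in blast)
  then have "\<exists>k. \<exists>y\<in>neg_eigenspace H. y \<noteq> 0 \<and> k = min (ldim_A y) (ldim_B y)"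
    using v by blast
  then obtain y where y: "y \<in> neg_eigenspace H" "y \<noteq> 0" and p: "pmin H = min (ldim_A y) (ldim_B y)"
    unfolding pmin_def by (smt (verit, ccfv_threshold) LeastI_ex)
  have yneg: "Re (cinner y (H *v y)) < 0" by (rule neg_space_neg[OF herm y])
  have "\<exists>a b. y = (\<Sum>i<pmin H. tens (a i) (b i))"
  proof (cases "ldim_A y \<le> ldim_B y")
    case True
    then have pe: "pmin H = ldim_A y" using p by simp
    obtain u :: "nat \<Rightarrow> complex^'a" where "y \<in> cspan {tens (u i) w | i w. i < ldim_A y}"
      using ldimA_ex by blast
    then obtain b where "y = (\<Sum>i<ldim_A y. tens (u i) (b i))"
      using span_tensA unfolding cspan_eq by blast
    then show ?thesis using pe by metis
  next
    case False
    then have pe: "pmin H = ldim_B y" using p by simp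
    obtain v :: "nat \<Rightarrow> complex^'b" where "y \<in> cspan {tens w (v j) | j w. j < ldim_B y}"
      using ldimB_ex by blast
    then obtain a where "y = (\<Sum>j<ldim_B y. tens (a j) (v j))"
      using span_tensB unfolding cspan_eq by blast
    then show ?thesis using pe by metis
  qed
  moreover have "pmin H \<le> CARD('a)" using p ldimA_le[of y] by simp
  moreover have "pmin H \<le> CARD('b)" using p ldimB_le[of y] by simp
  ultimately show ?thesis using yneg by metis
qed



definition mkop :: "(nat \<Rightarrow> 'r::finite) \<Rightarrow> nat \<Rightarrow> (nat \<Rightarrow> complex^'c::finite) \<Rightarrow> complex^'c^'r" where
  "mkop k p a = (\<chi> r c. \<Sum>i<p. if r = k i then a i $ c else 0)"

lemma kron_tens: "kron C D *v tens x y = tens (C *v x) (D *v y)"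
  by (simp add: kron_def tens_def matrix_vector_mult_def vec_eq_iff sum_pair_UNIV sum_product mult_ac)

lemma mkop_entry:
  assumes "inj_on k {..<p}" "i < p"
  shows "mkop k p a $ (k i) $ c = a i $ c"
proof -
  have "mkop k p a $ (k i) $ c = (\<Sum>j<p. if j = i then a j $ c else 0)"
    unfolding mkop_def vec_lambda_beta using assms by (intro sum.cong refl) (auto simp: inj_on_def)
  also have "\<dots> = a i $ c" using assms by (simp add: sum.delta)
  finally show ?thesis .
qed

lemma mkop_adj_axis:
  assumes "inj_on k {..<p}" "i < p"
  shows "adj (mkop k p a) *v axis (k i) 1 = cvec (a i)"
  by (simp add: mv_axis adj_def cvec_def mkop_entry[OF assms] vec_eq_iff)

lemma cvec_cvec[simp]: "cvec (cvec v) = v" by (simp add: cvec_def vec_eq_iff)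
lemma cmat_cmat[simp]: "cmat (cmat v) = v" by (simp add: cmat_def vec_eq_iff)

lemma adj_kron_z:
  assumes "inj_on k {..<p}" "inj_on l {..<p}"
  shows "adj (kron (mkop k p a) (mkop l p b)) *v (\<Sum>i<p. tens (axis (k i) 1) (axis (l i) 1))
       = (\<Sum>i<p. tens (cvec (a i)) (cvec (b i)))"
  unfolding adj_kron mv_sum kron_tens
  by (intro sum.cong refl) (simp add: mkop_adj_axis assms)

definition rowsupp :: "complex^'c::finite^'r::finite \<Rightarrow> 'r set \<Rightarrow> bool" where
  "rowsupp A K \<longleftrightarrow> (\<forall>r c. r \<notin> K \<longrightarrow> A $ r $ c = 0)"

lemma rowsupp_mkop: "rowsupp (mkop k p a) (k ` {..<p})"
  unfolding rowsupp_def mkop_def by (auto intro!: sum.neutral)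

lemma rowsupp_cmat: "rowsupp A K \<Longrightarrow> rowsupp (cmat A) K"
  unfolding rowsupp_def cmat_def by simp

lemma kron_mv_supp:
  assumes "rowsupp A K" "rowsupp B L" "(kron A B *v w) $ (r, s) \<noteq> 0"
  shows "r \<in> K \<and> s \<in> L"
  using assms unfolding rowsupp_def kron_def matrix_vector_mult_def by auto

lemma vec_decomp2: "(x::complex^('a::finite \<times> 'b::finite)) = (\<Sum>q\<in>UNIV. x $ q *s tens (axis (fst q) 1) (axis (snd q) 1))"
  by (simp add: vec_eq_iff sum_component tens_def axis_def vector_scalar_mult_def sum_pair_UNIV
        if_distrib[of "\<lambda>z. _ * z"] if_distrib[of "\<lambda>z. z * _"] sum.delta cong: if_cong)

lemma supported_kron:
  fixes M :: "complex^('a::finite \<times> 'b::finite)^('a \<times> 'b)"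
  assumes "rowsupp A (k ` {..<p})" "rowsupp B (l ` {..<p})"
  shows "supported_pp (kron A B ** M) p"
  unfolding supported_pp_def
proof (intro exI[of _ "\<lambda>i. axis (k i) 1"] exI[of _ "\<lambda>j. axis (l j) 1"] subsetI)
  fix x assume "x \<in> range (\<lambda>x. (kron A B ** M) *v x)"
  then obtain w where x: "x = kron A B *v (M *v w)" by (auto simp: mm_mv)
  let ?G = "{tens (axis (k i) 1) (axis (l j) 1) | i j. i < p \<and> j < p} :: (complex^('a \<times> 'b)) set"
  have "x $ q *s tens (axis (fst q) 1) (axis (snd q) 1) \<in> vec.span ?G" for q
  proof (cases "x $ q = 0")
    case True then show ?thesis by (simp add: vec.span_zero)
  next
    case False
    obtain r s where q: "q = (r, s)" by force
    have "r \<in> k ` {..<p} \<and> s \<in> l ` {..<p}" using kron_mv_supp[OF assms] False x q by blast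
    then obtain i j where "i < p" "j < p" "r = k i" "s = l j" by blast
    then have "tens (axis (fst q) 1) (axis (snd q) 1) \<in> ?G" using q by auto
    then show ?thesis by (intro vec.span_scale vec.span_base)
  qed
  then have "x \<in> vec.span ?G" by (subst vec_decomp2) (intro vec.span_sum)
  then show "x \<in> cspan ?G" by (simp add: cspan_eq)
qed



lemma sum3_swap13: "(\<Sum>a\<in>A. \<Sum>b\<in>B. \<Sum>c\<in>C. g a b c) = (\<Sum>c\<in>C. \<Sum>b\<in>B. \<Sum>a\<in>A. (g a b c :: complex))"
proof -
  have "(\<Sum>a\<in>A. \<Sum>b\<in>B. \<Sum>c\<in>C. g a b c) = (\<Sum>a\<in>A. \<Sum>c\<in>C. \<Sum>b\<in>B. g a b c)"
    by (intro sum.cong refl) (rule sum.swap)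
  also have "\<dots> = (\<Sum>c\<in>C. \<Sum>a\<in>A. \<Sum>b\<in>B. g a b c)" by (rule sum.swap)
  also have "\<dots> = (\<Sum>c\<in>C. \<Sum>b\<in>B. \<Sum>a\<in>A. g a b c)"
    by (intro sum.cong refl) (rule sum.swap)
  finally show ?thesis .
qed

lemma sum4_swap: "(\<Sum>a\<in>A. \<Sum>b\<in>B. \<Sum>c\<in>C. \<Sum>d\<in>D. g a b c d) = (\<Sum>c\<in>C. \<Sum>d\<in>D. \<Sum>a\<in>A. \<Sum>b\<in>B. (g a b c d :: complex))"
proof -
  have "(\<Sum>a\<in>A. \<Sum>b\<in>B. \<Sum>c\<in>C. \<Sum>d\<in>D. g a b c d) = (\<Sum>a\<in>A. \<Sum>c\<in>C. \<Sum>b\<in>B. \<Sum>d\<in>D. g a b c d)"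
    by (intro sum.cong refl) (rule sum.swap)
  also have "\<dots> = (\<Sum>c\<in>C. \<Sum>a\<in>A. \<Sum>b\<in>B. \<Sum>d\<in>D. g a b c d)" by (rule sum.swap)
  also have "\<dots> = (\<Sum>c\<in>C. \<Sum>a\<in>A. \<Sum>d\<in>D. \<Sum>b\<in>B. g a b c d)"
    by (intro sum.cong refl) (rule sum.swap)
  also have "\<dots> = (\<Sum>c\<in>C. \<Sum>d\<in>D. \<Sum>a\<in>A. \<Sum>b\<in>B. g a b c d)"
    by (intro sum.cong refl) (rule sum.swap)
  finally show ?thesis .
qed

lemma ptrans_congr:
  fixes \<rho> :: "complex^('a::finite \<times> 'b::finite)^('a \<times> 'b)"
  shows "ptrans (kron A B ** \<rho> ** adj (kron A B)) = kron (cmat A) B ** ptrans \<rho> ** adj (kron (cmat A) B)"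
  unfolding ptrans_def kron_def adj_def cmat_def matrix_matrix_mult_def
  apply (simp add: vec_eq_iff sum_pair_UNIV sum_distrib_left sum_distrib_right)
  apply (intro allI)
  apply (rule trans[OF sum3_swap13])
  apply (intro sum.cong refl)
  apply (simp add: mult_ac)
  done



lemma ptrans_herm: "hermitian \<rho> \<Longrightarrow> hermitian (ptrans \<rho>)"
  unfolding hermitian_def adj_def ptrans_def
  by (simp add: vec_eq_iff)

lemma ptrans_scaleR: "ptrans (c *\<^sub>R M) = c *\<^sub>R ptrans M"
  by (simp add: ptrans_def vec_eq_iff)

lemma ptrans_zero: "ptrans 0 = 0"
  by (simp add: ptrans_def vec_eq_iff)

lemma trace_scaleR: "trace (c *\<^sub>R (M::complex^'n::finite^'n)) = of_real c * trace M"
  apply (simp add: trace_def scaleR_entry sum_distrib_left)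
  by (simp add: scaleR_conv_of_real)

lemma mm_scaleR_left: "(c *\<^sub>R M) ** (N::complex^'k::finite^'n::finite) = c *\<^sub>R ((M::complex^'n^'m::finite) ** N)"
  by (simp add: matrix_matrix_mult_def vec_eq_iff scaleR_sum_right)

lemma mm_scaleR_right: "(M::complex^'n::finite^'m::finite) ** (c *\<^sub>R N) = c *\<^sub>R (M ** (N::complex^'k::finite^'n))"
  by (simp add: matrix_matrix_mult_def vec_eq_iff scaleR_sum_right)

lemma not_psd_neg: "hermitian H \<Longrightarrow> \<not> psd H \<Longrightarrow> \<exists>x. Re (cinner x (H *v x)) < 0"
  unfolding psd_def using herm_quad_real by (meson not_le)

lemma herm_congr: "hermitian H \<Longrightarrow> hermitian (X ** H ** adj X)"
  unfolding hermitian_def by (simp add: adj_mult matrix_mul_assoc)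

lemma quad_congr: "cinner z ((X ** H ** adj X) *v z) = cinner (adj X *v z) (H *v (adj X *v z))"
  by (simp add: mm_mv cinner_adj)

lemma trace_outer_self: "trace (outer v v) = cinner v v"
  by (simp add: trace_def outer_def cinner_def mult.commute)

lemma ew_prod:
  fixes W :: "complex^('a::finite \<times> 'b::finite)^('a \<times> 'b)"
  assumes sep: "\<forall>\<rho>. separable \<rho> \<longrightarrow> 0 \<le> Re (trace (W ** \<rho>))"
    and pa: "psd (\<alpha>::complex^'a^'a)" and pb: "psd (\<beta>::complex^'b^'b)"
  shows "0 \<le> Re (trace (W ** kron \<alpha> \<beta>))"
proof (cases "\<alpha> = 0 \<or> \<beta> = 0")
  case True
  then show ?thesis by (auto simp: trace_def matrix_matrix_mult_def)
next
  case False
  define ta where "ta = Re (trace \<alpha>)"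
  define tb where "tb = Re (trace \<beta>)"
  have ta: "0 < ta" using False psd_trace_pos pa ta_def by blast
  have tb: "0 < tb" using False psd_trace_pos pb tb_def by blast
  define a' where "a' = (1 / ta) *\<^sub>R \<alpha>"
  define b' where "b' = (1 / tb) *\<^sub>R \<beta>"
  have tra: "trace \<alpha> = of_real ta" using psd_trace_real[OF pa] ta_def by simp
  have trb: "trace \<beta> = of_real tb" using psd_trace_real[OF pb] tb_def by simp
  have "trace a' = of_real ((1 / ta) * ta)" unfolding a'_def trace_scaleR tra of_real_mult ..
  then have "trace a' = 1" using ta by simp
  then have da: "density a'" unfolding density_def a'_def
    using psd_scaleR[OF pa] ta by simp
  have "trace b' = of_real ((1 / tb) * tb)" unfolding b'_def trace_scaleR trb of_real_mult ..
  then have "trace b' = 1" using tb by simp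
  then have db: "density b'" unfolding density_def b'_def
    using psd_scaleR[OF pb] tb by simp
  have dk: "density (kron a' b')" using da db unfolding density_def
    by (simp add: psd_kron trace_kron)
  have "separable (kron a' b')" unfolding separable_def
  proof (intro conjI dk exI[of _ "1::nat"] exI[of _ "\<lambda>_. 1::real"] exI[of _ "\<lambda>_. a'"] exI[of _ "\<lambda>_. b'"])
  qed (use da db in auto)
  then have "0 \<le> Re (trace (W ** kron a' b'))" using sep by blast
  moreover have "kron \<alpha> \<beta> = (ta * tb) *\<^sub>R kron a' b'"
    using ta tb by (simp add: a'_def b'_def kron_scaleR)
  ultimately show ?thesis using ta tb
    by (simp add: mm_scaleR_right trace_scaleR)
qed



lemma inj_nat_ex:
  assumes "p \<le> CARD('a::finite)"
  shows "\<exists>k::nat \<Rightarrow> 'a. inj_on k {..<p}"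
  using card_le_inj[of "{..<p}" "UNIV::'a set"] assms by auto

lemma quad_scaleR: "cinner z ((c *\<^sub>R P) *v z) = of_real c * cinner z (P *v z)"
  by (simp add: mv_scaleR_mat cinner_scale_right)

lemma part1:
  fixes \<rho> :: "complex ^ ('a::finite \<times> 'b::finite) ^ ('a \<times> 'b)"
  assumes npt: "npt_state \<rho>"
  shows "\<exists>(A :: complex ^ 'a ^ 'a) (B :: complex ^ 'b ^ 'b).
               let \<sigma> = kron A B ** \<rho> ** adj (kron A B) in
               Re (trace \<sigma>) > 0 \<and>
               npt_state ((1 / Re (trace \<sigma>)) *\<^sub>R \<sigma>) \<and>
               supported_pp \<sigma> (pmin (ptrans \<rho>))"
proof -
  have pr: "psd \<rho>" and nps: "\<not> psd (ptrans \<rho>)" using npt unfolding npt_state_def density_def by auto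
  have hH: "hermitian (ptrans \<rho>)" using pr psd_herm ptrans_herm by blast
  obtain x1 where "Re (cinner x1 (ptrans \<rho> *v x1)) < 0" using not_psd_neg[OF hH nps] by blast
  then obtain a b where yneg: "Re (cinner (\<Sum>i<pmin (ptrans \<rho>). tens (a i) (b i))
      (ptrans \<rho> *v (\<Sum>i<pmin (ptrans \<rho>). tens (a i) (b i)))) < 0"
    and pa: "pmin (ptrans \<rho>) \<le> CARD('a)" and pb: "pmin (ptrans \<rho>) \<le> CARD('b)"
    using pmin_witness[OF hH] by blast
  define p where "p = pmin (ptrans \<rho>)"
  define y where "y = (\<Sum>i<p. tens (a i) (b i))"
  obtain k :: "nat \<Rightarrow> 'a" where k: "inj_on k {..<p}" using inj_nat_ex pa p_def by blast
  obtain l :: "nat \<Rightarrow> 'b" where l: "inj_on l {..<p}" using inj_nat_ex pb p_def by blast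
  define A where "A = cmat (mkop k p (\<lambda>i. cvec (a i)))"
  define B where "B = mkop l p (\<lambda>i. cvec (b i))"
  define z where "z = (\<Sum>i<p. tens (axis (k i) 1) (axis (l i) 1))"
  have hz: "adj (kron (cmat A) B) *v z = y"
    unfolding A_def B_def z_def y_def cmat_cmat using adj_kron_z[OF k l] by simp
  define \<sigma> where "\<sigma> = kron A B ** \<rho> ** adj (kron A B)"
  have qz: "cinner z (ptrans \<sigma> *v z) = cinner y (ptrans \<rho> *v y)"
    unfolding \<sigma>_def ptrans_congr quad_congr hz ..
  have yn: "Re (cinner y (ptrans \<rho> *v y)) < 0" using yneg by (simp add: y_def p_def)
  have ps: "psd \<sigma>" unfolding \<sigma>_def by (rule psd_congr[OF pr])
  have "\<sigma> \<noteq> 0"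
  proof
    assume "\<sigma> = 0"
    then have "cinner z (ptrans \<sigma> *v z) = 0" by (simp add: ptrans_zero)
    then show False using qz yn by simp
  qed
  then have tpos: "0 < Re (trace \<sigma>)" using psd_trace_pos[OF ps] by blast
  define t where "t = Re (trace \<sigma>)"
  have trs: "trace \<sigma> = of_real t" using psd_trace_real[OF ps] t_def by simp
  have "trace ((1 / t) *\<^sub>R \<sigma>) = of_real ((1 / t) * t)" unfolding trace_scaleR trs of_real_mult ..
  then have "trace ((1 / t) *\<^sub>R \<sigma>) = 1" using tpos t_def by simp
  then have dN: "density ((1 / t) *\<^sub>R \<sigma>)" unfolding density_def
    using psd_scaleR[OF ps] tpos t_def by simp
  have "Re (cinner z (ptrans ((1 / t) *\<^sub>R \<sigma>) *v z)) = (1 / t) * Re (cinner y (ptrans \<rho> *v y))"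
    unfolding ptrans_scaleR quad_scaleR qz by simp
  also have "\<dots> < 0" using yn tpos t_def by (simp add: divide_neg_pos)
  finally have "\<not> psd (ptrans ((1 / t) *\<^sub>R \<sigma>))" unfolding psd_def by (meson not_le)
  then have nN: "npt_state ((1 / t) *\<^sub>R \<sigma>)" using dN by (simp add: npt_state_def)
  have sup: "supported_pp \<sigma> p"
  proof -
    have "\<sigma> = kron A B ** (\<rho> ** adj (kron A B))" by (simp add: \<sigma>_def matrix_mul_assoc)
    moreover have "supported_pp (kron A B ** (\<rho> ** adj (kron A B))) p"
      unfolding A_def B_def by (rule supported_kron[OF rowsupp_cmat[OF rowsupp_mkop] rowsupp_mkop])
    ultimately show ?thesis by simp
  qed
  show ?thesis
    by (intro exI[of _ A] exI[of _ B]) (use tpos nN sup in \<open>simp add: Let_def \<sigma>_def[symmetric] t_def[symmetric] p_def[symmetric]\<close>)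
qed



lemma part2:
  fixes W :: "complex ^ ('a::finite \<times> 'b::finite) ^ ('a \<times> 'b)"
  assumes ew: "ent_witness W"
  shows "\<exists>(A :: complex ^ 'a ^ 'a) (B :: complex ^ 'b ^ 'b).
               let W' = kron A B ** W ** adj (kron A B) in
               ent_witness W' \<and> supported_pp W' (pmin W)"
proof -
  have hW: "hermitian W" and sep: "\<forall>\<rho>. separable \<rho> \<longrightarrow> 0 \<le> Re (trace (W ** \<rho>))"
    and ex: "\<exists>\<sigma>. entangled \<sigma> \<and> Re (trace (W ** \<sigma>)) < 0"
    using ew unfolding ent_witness_def by auto
  have "\<exists>x1. Re (cinner x1 (W *v x1)) < 0"
  proof (rule ccontr)
    assume "\<not> ?thesis"
    then have nn: "\<forall>x. 0 \<le> Re (cinner x (W *v x))" by (meson not_le)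
    obtain \<sigma> where "entangled \<sigma>" "Re (trace (W ** \<sigma>)) < 0" using ex by blast
    then have "psd \<sigma>" unfolding entangled_def density_def by blast
    then have "0 \<le> Re (trace (W ** \<sigma>))" using trace_psd_nonneg nn by blast
    then show False using \<open>Re (trace (W ** \<sigma>)) < 0\<close> by simp
  qed
  then obtain x1 where "Re (cinner x1 (W *v x1)) < 0" by blast
  then obtain a b where yneg: "Re (cinner (\<Sum>i<pmin W. tens (a i) (b i))
      (W *v (\<Sum>i<pmin W. tens (a i) (b i)))) < 0"
    and pa: "pmin W \<le> CARD('a)" and pb: "pmin W \<le> CARD('b)"
    using pmin_witness[OF hW] by blast
  define p where "p = pmin W"
  define y where "y = (\<Sum>i<p. tens (a i) (b i))"
  obtain k :: "nat \<Rightarrow> 'a" where k: "inj_on k {..<p}" using inj_nat_ex pa p_def by blast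
  obtain l :: "nat \<Rightarrow> 'b" where l: "inj_on l {..<p}" using inj_nat_ex pb p_def by blast
  define A where "A = mkop k p (\<lambda>i. cvec (a i))"
  define B where "B = mkop l p (\<lambda>i. cvec (b i))"
  define X where "X = kron A B"
  define z where "z = (\<Sum>i<p. tens (axis (k i) 1) (axis (l i) 1))"
  have hz: "adj X *v z = y"
    unfolding X_def A_def B_def z_def y_def using adj_kron_z[OF k l] by simp
  define W' where "W' = X ** W ** adj X"
  have yn: "Re (cinner y (W *v y)) < 0" using yneg by (simp add: y_def p_def)
  have qz: "cinner z (W' *v z) = cinner y (W *v y)"
    unfolding W'_def quad_congr hz ..
  have hW': "hermitian W'" unfolding W'_def by (rule herm_congr[OF hW])
  have sep': "0 \<le> Re (trace (W' ** \<rho>))" if "separable \<rho>" for \<rho>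
  proof -
    have "\<exists>K (pr :: nat \<Rightarrow> real) (\<alpha> :: nat \<Rightarrow> complex ^ 'a ^ 'a) (\<beta> :: nat \<Rightarrow> complex ^ 'b ^ 'b).
        (\<forall>i<K. 0 \<le> pr i \<and> density (\<alpha> i) \<and> density (\<beta> i)) \<and> (\<Sum>i<K. pr i) = 1 \<and>
        \<rho> = (\<Sum>i<K. pr i *\<^sub>R kron (\<alpha> i) (\<beta> i))"
      using that unfolding separable_def by (rule conjunct2)
    then obtain K :: nat and pr \<alpha> \<beta> where ab: "\<forall>i<K. 0 \<le> pr i \<and> density (\<alpha> i) \<and> density (\<beta> i)"
      and r: "\<rho> = (\<Sum>i<K. pr i *\<^sub>R kron (\<alpha> i) (\<beta> i))"
      by blast
    have "trace (W' ** \<rho>) = trace (X ** (W ** adj X ** \<rho>))"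
      by (simp add: W'_def matrix_mul_assoc)
    also have "\<dots> = trace ((W ** adj X ** \<rho>) ** X)" by (rule trace_mul_sym)
    also have "\<dots> = trace (W ** (adj X ** \<rho> ** X))" by (simp add: matrix_mul_assoc)
    also have "adj X ** \<rho> ** X = (\<Sum>i<K. pr i *\<^sub>R kron (adj A ** \<alpha> i ** A) (adj B ** \<beta> i ** B))"
      unfolding r mm_sum_right mm_sum_left mm_scaleR_left mm_scaleR_right X_def adj_kron kron_mult ..
    finally have tr: "trace (W' ** \<rho>) = (\<Sum>i<K. of_real (pr i) * trace (W ** kron (adj A ** \<alpha> i ** A) (adj B ** \<beta> i ** B)))"
      by (simp add: mm_sum_right trace_sum mm_scaleR_right trace_scaleR)
    have "0 \<le> pr i * Re (trace (W ** kron (adj A ** \<alpha> i ** A) (adj B ** \<beta> i ** B)))" if "i < K" for i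
    proof -
      have "psd (\<alpha> i)" "psd (\<beta> i)" "0 \<le> pr i" using ab that unfolding density_def by auto
      moreover have "psd (adj A ** \<alpha> i ** A)" using psd_congr[OF \<open>psd (\<alpha> i)\<close>, of "adj A"] by simp
      moreover have "psd (adj B ** \<beta> i ** B)" using psd_congr[OF \<open>psd (\<beta> i)\<close>, of "adj B"] by simp
      ultimately show ?thesis using ew_prod[OF sep] by simp
    qed
    then show ?thesis unfolding tr Re_sum by (intro sum_nonneg) simp
  qed
  have "y \<noteq> 0" using yn by auto
  then have "z \<noteq> 0" using hz by auto
  define nz where "nz = Re (cinner z z)"
  have nzpos: "0 < nz" using \<open>z \<noteq> 0\<close> cinner_self_ge0[of z] cinner_self_Re_eq0[of z] nz_def by linarith
  have czz: "cinner z z = of_real nz" unfolding nz_def by (simp add: cinner_self)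
  define \<sigma>' where "\<sigma>' = (1 / nz) *\<^sub>R outer z z"
  have "trace \<sigma>' = of_real ((1 / nz) * nz)" unfolding \<sigma>'_def trace_scaleR trace_outer_self czz of_real_mult ..
  then have "trace \<sigma>' = 1" using nzpos by simp
  then have d': "density \<sigma>'" unfolding density_def \<sigma>'_def using psd_scaleR[OF psd_outer, of "1 / nz"] nzpos by simp
  have "Re (trace (W' ** \<sigma>')) = (1 / nz) * Re (cinner y (W *v y))"
    unfolding \<sigma>'_def mm_scaleR_right trace_scaleR trace_outer qz by simp
  also have "\<dots> < 0" using yn nzpos by (simp add: divide_neg_pos)
  finally have neg': "Re (trace (W' ** \<sigma>')) < 0" .
  then have "\<not> separable \<sigma>'" using sep' by (meson not_le)
  then have "entangled \<sigma>'" using d' by (simp add: entangled_def)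
  then have ew': "ent_witness W'" unfolding ent_witness_def using hW' sep' neg' by blast
  have sup: "supported_pp W' p"
  proof -
    have "W' = kron A B ** (W ** adj X)" by (simp add: W'_def X_def matrix_mul_assoc)
    moreover have "supported_pp (kron A B ** (W ** adj X)) p"
      unfolding A_def B_def by (rule supported_kron[OF rowsupp_mkop rowsupp_mkop])
    ultimately show ?thesis by simp
  qed
  show ?thesis
    by (intro exI[of _ A] exI[of _ B]) (use ew' sup in \<open>simp add: Let_def W'_def X_def p_def\<close>)
qed


theorem lemma10:
  fixes \<rho> W :: "complex ^ ('a::finite \<times> 'b::finite) ^ ('a \<times> 'b)"
  shows "(npt_state \<rho> \<longrightarrow>
            (\<exists>(A :: complex ^ 'a ^ 'a) (B :: complex ^ 'b ^ 'b).
               let \<sigma> = kron A B ** \<rho> ** adj (kron A B) in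
               Re (trace \<sigma>) > 0 \<and>
               npt_state ((1 / Re (trace \<sigma>)) *\<^sub>R \<sigma>) \<and>
               supported_pp \<sigma> (pmin (ptrans \<rho>))))
       \<and> (ent_witness W \<longrightarrow>
            (\<exists>(A :: complex ^ 'a ^ 'a) (B :: complex ^ 'b ^ 'b).
               let W' = kron A B ** W ** adj (kron A B) in
               ent_witness W' \<and> supported_pp W' (pmin W)))"
  by (intro conjI impI; (erule part1 | erule part2))

end
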